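(* Let $X=\{x_1,\ldots,x_n\}\subseteq\mathbb{R}^d$, $\varepsilon\in(0,1)$, let $\Pi\in\mathbb{R}^{m\times d}$ provide $\frac{\varepsilon}{60}$-convex hull distortion for $S_X$, and let $\alpha\colon\mathbb{R}^d\to\mathbb{R}^m$ be the solution map $\alpha(u)=\arg\min_{z\in F_u}\|z\|$. Let $V=\bigcup_{k=1}^nV_k$. Then $\alpha$ is locally Lipschitz at every point of $V\setminus X$ (i.e., for each such $u$ there are a neighborhood $U$ of $u$ and $c>0$ with $\|\alpha(v)-\alpha(w)\|\le c\|v-w\|$ for all $v,w\in U$), and $\mathbb{R}^d\setminus V$ has Lebesgue measure zero. In particular $\alpha$ is locally Lipschitz almost everywhere on $\mathbb{R}^d$.
   Context: Norms are Euclidean. $S_X=\overline{\{(x-y)/\|x-y\|: x\ne y\in X\}}$. A linear $\Pi\colon\mathbb{R}^d\to\mathbb{R}^m$ provides $\eta$-convex hull distortion for $T\subseteq S^{d-1}$ if $|\,\|\Pi x\|-\|x\|\,|<\eta$ for all $x\in\operatorname{conv}(T)$. For $u\in\mathbb{R}^d$, $u_{NN}$ denotes a point of $X$ at minimal distance from $u$ (chosen by some fixed rule when not unique). The Voronoi cell of $x_k$ is $V_k=\{u:\|u-x_k\|<\|u-x_j\|\ \forall j\ne k\}$. For $z\in\mathbb{R}^m$, $u\in\mathbb{R}^d$, $i=1,\ldots,n$: $g_i(z,u)=\langle z,\Pi(x_i-u_{NN})\rangle-\langle u-u_{NN},x_i-u_{NN}\rangle-\frac{\varepsilon}{10}\|u-u_{NN}\|\|x_i-u_{NN}\|$,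 $g_{n+i}(z,u)=\langle u-u_{NN},x_i-u_{NN}\rangle-\langle z,\Pi(x_i-u_{NN})\rangle-\frac{\varepsilon}{10}\|u-u_{NN}\|\|x_i-u_{NN}\|$, and $F_u=\{z\in\mathbb{R}^m: g_i(z,u)\le0,\ i=1,\ldots,2n\}$, a closed convex set which is known to be nonempty for every $u$ under the stated hypothesis on $\Pi$; hence $\alpha(u)$ (the orthogonal projection of $0$ onto $F_u$) is well defined. *)

theory Defs
  imports "HOL-Analysis.Analysis"
begin

definition diff_dirs :: "'a::real_normed_vector set \<Rightarrow> 'a set" where
  "diff_dirs X = closure {(x - y) /\<^sub>R norm (x - y) | x y. x \<in> X \<and> y \<in> X \<and> x \<noteq> y}"

definition conv_hull_distortion ::
  "('a::real_normed_vector \<Rightarrow> 'b::real_normed_vector) \<Rightarrow> real \<Rightarrow> 'a set \<Rightarrow> bool" where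
  "conv_hull_distortion P eta T \<longleftrightarrow>
     (\<forall>x \<in> convex hull T. \<bar>norm (P x) - norm x\<bar> < eta)"

definition is_NN_rule :: "'a::metric_space set \<Rightarrow> ('a \<Rightarrow> 'a) \<Rightarrow> bool" where
  "is_NN_rule X NN \<longleftrightarrow> (\<forall>u. NN u \<in> X \<and> (\<forall>y \<in> X. dist u (NN u) \<le> dist u y))"

definition voronoi_cell :: "'a::metric_space set \<Rightarrow> 'a \<Rightarrow> 'a set" where
  "voronoi_cell X x = {u. \<forall>y \<in> X. y \<noteq> x \<longrightarrow> dist u x < dist u y}"

text \<open>The feasible set F_u: all z with g_i(z,u) <= 0 and g_{n+i}(z,u) <= 0 for every x_i in X.\<close>
definition feas_set ::
  "('a::real_inner \<Rightarrow> 'b::real_inner) \<Rightarrow> real \<Rightarrow> 'a set \<Rightarrow> ('a \<Rightarrow> 'a) \<Rightarrow> 'a \<Rightarrow> 'b set" where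
  "feas_set P eps X NN u =
     {z. \<forall>x \<in> X.
        inner z (P (x - NN u)) - inner (u - NN u) (x - NN u)
          - (eps / 10) * norm (u - NN u) * norm (x - NN u) \<le> 0
      \<and> inner (u - NN u) (x - NN u) - inner z (P (x - NN u))
          - (eps / 10) * norm (u - NN u) * norm (x - NN u) \<le> 0}"

definition sol_map ::
  "('a::real_inner \<Rightarrow> 'b::euclidean_space) \<Rightarrow> real \<Rightarrow> 'a set \<Rightarrow> ('a \<Rightarrow> 'a) \<Rightarrow> 'a \<Rightarrow> 'b" where
  "sol_map P eps X NN u = closest_point (feas_set P eps X NN u) 0"

definition locally_lipschitz_at :: "('a::metric_space \<Rightarrow> 'b::metric_space) \<Rightarrow> 'a \<Rightarrow> bool" where
  "locally_lipschitz_at f u \<longleftrightarrow>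
     (\<exists>U c. open U \<and> u \<in> U \<and> c > 0 \<and> (\<forall>v \<in> U. \<forall>w \<in> U. dist (f v) (f w) \<le> c * dist v w))"

end

theory Submission
  imports Defs
begin


lemma chain_lemma:
  fixes \<phi> :: "real \<Rightarrow> 'a::metric_space"
  assumes fin: "finite \<E>" and cl: "\<And>E. E \<in> \<E> \<Longrightarrow> closed E"
    and cov: "{0..1} \<subseteq> \<Union>\<E>"
    and lip: "\<And>E s t. E \<in> \<E> \<Longrightarrow> s \<in> E \<Longrightarrow> t \<in> E \<Longrightarrow> s \<in> {0..1} \<Longrightarrow> t \<in> {0..1}
                 \<Longrightarrow> dist (\<phi> s) (\<phi> t) \<le> K * \<bar>s - t\<bar>"
  shows "dist (\<phi> 0) (\<phi> 1) \<le> K"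
proof -
  have loc: "\<exists>d>0. \<forall>s\<in>{0..1}. \<bar>s - t\<bar> < d \<longrightarrow> dist (\<phi> s) (\<phi> t) \<le> K * \<bar>s - t\<bar>"
    if t: "t \<in> {0..1}" for t
  proof -
    have "\<forall>E\<in>\<E>. eventually (\<lambda>s. s \<in> E \<longrightarrow> t \<in> E) (nhds t)"
    proof
      fix E assume E: "E \<in> \<E>"
      show "eventually (\<lambda>s. s \<in> E \<longrightarrow> t \<in> E) (nhds t)"
      proof (cases "t \<in> E")
        case True then show ?thesis by simp
      next
        case False
        have "eventually (\<lambda>s. s \<in> - E) (nhds t)"
          using False cl[OF E] by (intro eventually_nhds_in_open) auto
        then show ?thesis by (rule eventually_mono) auto
      qed
    qed
    then have "eventually (\<lambda>s. \<forall>E\<in>\<E>. s \<in> E \<longrightarrow> t \<in> E) (nhds t)"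
      using fin by (simp add: eventually_ball_finite)
    then obtain d where d: "d > 0" "\<And>s. dist s t < d \<Longrightarrow> \<forall>E\<in>\<E>. s \<in> E \<longrightarrow> t \<in> E"
      unfolding eventually_nhds_metric by blast
    show ?thesis
    proof (intro exI[of _ d] conjI ballI impI)
      fix s assume s: "s \<in> {0..1}" "\<bar>s - t\<bar> < d"
      then obtain E where E: "E \<in> \<E>" "s \<in> E" using cov by blast
      with d(2)[of s] s have "t \<in> E" by (auto simp: dist_real_def)
      then show "dist (\<phi> s) (\<phi> t) \<le> K * \<bar>s - t\<bar>" using lip[OF E(1) E(2) _ s(1) t] by blast
    qed (use d in auto)
  qed
  define S where "S = {t\<in>{0..1}. dist (\<phi> 0) (\<phi> t) \<le> K * t}"
  have S0: "0 \<in> S" by (simp add: S_def)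
  have Sne: "S \<noteq> {}" using S0 by blast
  have bdd: "bdd_above S" by (auto simp: S_def bdd_above_def)
  define \<tau> where "\<tau> = Sup S"
  have t0: "0 \<le> \<tau>" unfolding \<tau>_def using S0 bdd by (rule cSup_upper)
  have t1: "\<tau> \<le> 1" unfolding \<tau>_def using Sne by (rule cSup_least) (auto simp: S_def)
  obtain d where d: "d > 0" "\<And>s. s\<in>{0..1} \<Longrightarrow> \<bar>s - \<tau>\<bar> < d \<Longrightarrow> dist (\<phi> s) (\<phi> \<tau>) \<le> K * \<bar>s - \<tau>\<bar>"
    using loc[of \<tau>] t0 t1 by auto
  have "\<tau> - d < Sup S" using d(1) \<tau>_def by simp
  then obtain s where s: "s \<in> S" "\<tau> - d < s" using less_cSup_iff[OF Sne bdd] by blast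
  have st: "s \<le> \<tau>" unfolding \<tau>_def using s(1) bdd by (rule cSup_upper)
  have sI: "s \<in> {0..1}" "dist (\<phi> 0) (\<phi> s) \<le> K * s" using s(1) by (auto simp: S_def)
  have "dist (\<phi> 0) (\<phi> \<tau>) \<le> dist (\<phi> 0) (\<phi> s) + dist (\<phi> s) (\<phi> \<tau>)" by (rule dist_triangle)
  also have "\<dots> \<le> K * s + K * \<bar>s - \<tau>\<bar>" using sI d(2)[of s] s(2) st by (intro add_mono) auto
  also have "\<dots> = K * \<tau>" using st by (simp add: algebra_simps)
  finally have tS: "dist (\<phi> 0) (\<phi> \<tau>) \<le> K * \<tau>" .
  have "\<tau> = 1"
  proof (rule ccontr)
    assume "\<tau> \<noteq> 1"
    with t1 have lt: "\<tau> < 1" by simp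
    define s' where "s' = min 1 (\<tau> + d/2)"
    have s'I: "s' \<in> {0..1}" "\<bar>s' - \<tau>\<bar> < d" "\<tau> < s'" using t0 lt d(1) by (auto simp: s'_def)
    have "dist (\<phi> 0) (\<phi> s') \<le> dist (\<phi> 0) (\<phi> \<tau>) + dist (\<phi> \<tau>) (\<phi> s')" by (rule dist_triangle)
    also have "\<dots> \<le> K * \<tau> + K * \<bar>s' - \<tau>\<bar>" using tS d(2)[OF s'I(1,2)] by (simp add: dist_commute)
    also have "\<dots> = K * s'" using s'I by (simp add: algebra_simps)
    finally have "s' \<in> S" using s'I by (simp add: S_def)
    then have "s' \<le> \<tau>" unfolding \<tau>_def using bdd by (rule cSup_upper)
    then show False using s'I by simp
  qed
  then show ?thesis using tS by simp
qed




definition polyF :: "('i \<Rightarrow> 'm::euclidean_space) \<Rightarrow> 'i set \<Rightarrow> ('i \<Rightarrow> real) \<Rightarrow> 'm set" where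
  "polyF a I b = {z. \<forall>i\<in>I. a i \<bullet> z \<le> b i}"

definition validJ :: "('i \<Rightarrow> 'm::euclidean_space) \<Rightarrow> 'i set \<Rightarrow> ('i \<Rightarrow> real) \<Rightarrow> 'i set \<Rightarrow> 'm \<Rightarrow> bool" where
  "validJ a I b J z \<longleftrightarrow> J \<subseteq> I \<and> z \<in> polyF a I b \<and> (\<forall>i\<in>J. a i \<bullet> z = b i) \<and> - z \<in> convex_cone hull (a ` J)"

lemma polyF_eq: "polyF a I b = (\<Inter>i\<in>I. {z. a i \<bullet> z \<le> b i})"
  by (auto simp: polyF_def)

lemma closed_polyF: "closed (polyF a I b)"
  unfolding polyF_eq by (intro closed_INT ballI closed_halfspace_le)

lemma convex_polyF: "convex (polyF a I b)"
  unfolding polyF_eq by (intro convex_INT ballI convex_halfspace_le)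

lemma validJ_suff:
  assumes "validJ a I b J z"
  shows "z = closest_point (polyF a I b) 0"
proof (rule closest_point_unique[OF convex_polyF closed_polyF])
  show zF: "z \<in> polyF a I b" using assms by (simp add: validJ_def)
  show "\<forall>y\<in>polyF a I b. dist 0 z \<le> dist 0 y"
  proof
    fix y assume y: "y \<in> polyF a I b"
    have "a ` J \<subseteq> {c. (y - z) \<bullet> c \<le> 0}"
    proof
      fix c assume "c \<in> a ` J"
      then obtain i where i: "i \<in> J" "c = a i" by blast
      then have "i \<in> I" using assms by (auto simp: validJ_def)
      then have "a i \<bullet> y \<le> b i" "a i \<bullet> z = b i" using y i assms by (auto simp: validJ_def polyF_def)
      then show "c \<in> {c. (y - z) \<bullet> c \<le> 0}" using i by (smt (verit) inner_commute inner_diff_right mem_Collect_eq)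
    qed
    then have "convex_cone hull (a ` J) \<subseteq> {c. (y - z) \<bullet> c \<le> 0}"
      by (intro hull_minimal) (simp_all add: convex_cone_halfspace_le)
    then have "(y - z) \<bullet> (- z) \<le> 0" using assms by (auto simp: validJ_def)
    then have h: "0 \<le> z \<bullet> (y - z)" by (simp add: inner_commute)
    have "norm y ^ 2 = norm z ^ 2 + 2 * (z \<bullet> (y - z)) + norm (y - z) ^ 2"
      by (simp add: power2_norm_eq_inner algebra_simps inner_commute)
    then have "norm z ^ 2 \<le> norm y ^ 2" using h by simp
    then show "dist 0 z \<le> dist 0 y" by (simp add: power_mono_iff)
  qed
qed

lemma validJ_nec:
  fixes a :: "'i \<Rightarrow> 'm::euclidean_space"
  assumes fin: "finite I" and ne: "polyF a I b \<noteq> {}"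
  defines "p \<equiv> closest_point (polyF a I b) 0"
  shows "validJ a I b {i\<in>I. a i \<bullet> p = b i} p"
proof -
  let ?F = "polyF a I b"
  let ?J = "{i\<in>I. a i \<bullet> p = b i}"
  have pF: "p \<in> ?F" unfolding p_def by (rule closest_point_in_set[OF closed_polyF ne])
  have pmin: "\<And>y. y \<in> ?F \<Longrightarrow> norm p \<le> norm y"
    using closest_point_le[OF closed_polyF, of _ a I b 0] unfolding p_def by simp
  have "- p \<in> convex_cone hull (a ` ?J)"
  proof (rule ccontr)
    assume nin: "- p \<notin> convex_cone hull (a ` ?J)"
    obtain c \<beta> where c: "c \<bullet> (- p) < \<beta>" "\<And>x. x \<in> convex_cone hull (a ` ?J) \<Longrightarrow> c \<bullet> x > \<beta>"
      using separating_hyperplane_closed_point[OF convex_convex_cone_hull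
          closed_convex_cone_hull nin] fin by auto
    have \<beta>: "\<beta> < 0" using c(2)[OF convex_cone_hull_contains_0] by simp
    have cpos: "c \<bullet> x \<ge> 0" if x: "x \<in> convex_cone hull (a ` ?J)" for x
    proof (rule ccontr)
      assume "\<not> c \<bullet> x \<ge> 0"
      then have neg: "c \<bullet> x < 0" by simp
      define t where "t = \<beta> / (c \<bullet> x)"
      have t: "t \<ge> 0" using neg \<beta> by (simp add: t_def divide_nonpos_neg)
      have "t *\<^sub>R x \<in> convex_cone hull (a ` ?J)"
        using x t by (simp add: convex_cone_hull_mul)
      then have "c \<bullet> (t *\<^sub>R x) > \<beta>" by (rule c(2))
      moreover have "c \<bullet> (t *\<^sub>R x) = \<beta>" using neg by (simp add: t_def)
      ultimately show False by simp
    qed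
    define y where "y = - c"
    have yJ: "\<And>i. i \<in> ?J \<Longrightarrow> a i \<bullet> y \<le> 0"
      using cpos[OF hull_inc] by (force simp: y_def inner_commute)
    have py: "p \<bullet> y < 0" using c(1) \<beta> by (simp add: y_def inner_commute)
    have ev1: "eventually (\<lambda>e. \<forall>i\<in>I - ?J. a i \<bullet> (p + e *\<^sub>R y) < b i) (at_right (0::real))"
    proof (rule eventually_ball_finite)
      show "finite (I - ?J)" using fin by simp
      show "\<forall>i\<in>I - ?J. eventually (\<lambda>e. a i \<bullet> (p + e *\<^sub>R y) < b i) (at_right 0)"
      proof
        fix i assume i: "i \<in> I - ?J"
        have lt: "a i \<bullet> p < b i" using i pF by (force simp: polyF_def)
        have "((\<lambda>e. a i \<bullet> (p + e *\<^sub>R y)) \<longlongrightarrow> a i \<bullet> (p + 0 *\<^sub>R y)) (at_right 0)"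
          by (intro tendsto_intros)
        then show "eventually (\<lambda>e. a i \<bullet> (p + e *\<^sub>R y) < b i) (at_right 0)"
          using lt by (intro order_tendstoD) auto
      qed
    qed
    have "((\<lambda>e. 2 * (p \<bullet> y) + e * (y \<bullet> y)) \<longlongrightarrow> 2 * (p \<bullet> y) + 0 * (y \<bullet> y)) (at_right 0)"
      by (intro tendsto_intros)
    then have ev2: "eventually (\<lambda>e. 2 * (p \<bullet> y) + e * (y \<bullet> y) < 0) (at_right (0::real))"
      by (rule order_tendstoD(2)) (use py in simp)
    have ev3: "eventually (\<lambda>e. e > (0::real)) (at_right 0)"
      by (simp add: eventually_at_right_less)
    obtain e where e: "\<forall>i\<in>I - ?J. a i \<bullet> (p + e *\<^sub>R y) < b i"
      "2 * (p \<bullet> y) + e * (y \<bullet> y) < 0" "e > 0"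
      using eventually_happens[OF eventually_conj[OF ev1 eventually_conj[OF ev2 ev3]]] by auto
    have "p + e *\<^sub>R y \<in> ?F"
    proof -
      have "a i \<bullet> (p + e *\<^sub>R y) \<le> b i" if i: "i \<in> I" for i
      proof (cases "i \<in> ?J")
        case True
        then have "a i \<bullet> (p + e *\<^sub>R y) = b i + e * (a i \<bullet> y)" by (simp add: inner_add_right)
        also have "\<dots> \<le> b i" using yJ[OF True] e(3) by (simp add: mult_nonneg_nonpos)
        finally show ?thesis .
      next
        case False
        then have "i \<in> I - ?J" using i by blast
        then show ?thesis using e(1) by (meson less_imp_le)
      qed
      then show ?thesis by (simp add: polyF_def)
    qed
    then have "norm p \<le> norm (p + e *\<^sub>R y)" by (rule pmin)
    then have "norm p ^ 2 \<le> norm (p + e *\<^sub>R y) ^ 2" by (simp add: power_mono)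
    also have "norm (p + e *\<^sub>R y) ^ 2 = norm p ^ 2 + e * (2 * (p \<bullet> y) + e * (y \<bullet> y))"
      by (simp add: power2_norm_eq_inner algebra_simps inner_commute)
    finally have "0 \<le> e * (2 * (p \<bullet> y) + e * (y \<bullet> y))" by simp
    moreover have "e * (2 * (p \<bullet> y) + e * (y \<bullet> y)) < 0" using e(2,3) by (simp add: mult_pos_neg)
    ultimately show False by simp
  qed
  then show ?thesis using pF by (simp add: validJ_def)
qed


lemma span_bound1:
  fixes a :: "'i \<Rightarrow> 'm::euclidean_space"
  assumes fin: "finite J"
  shows "\<exists>C\<ge>0. \<forall>w\<in>span (a ` J). norm w \<le> C * (\<Sum>i\<in>J. \<bar>a i \<bullet> w\<bar>)"
proof -
  define f where "f w = (\<Sum>i\<in>J. (a i \<bullet> w) *\<^sub>R a i)" for w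
  have lin: "linear f"
    by (auto intro!: linearI simp: f_def inner_add_right scaleR_add_left sum.distrib scaleR_sum_right)
  then have bl: "bounded_linear f" by (simp add: linear_conv_bounded_linear)
  have inj: "\<forall>w\<in>span (a ` J). f w = 0 \<longrightarrow> w = 0"
  proof (intro ballI impI)
    fix w assume w: "w \<in> span (a ` J)" and f0: "f w = 0"
    have "w \<bullet> f w = (\<Sum>i\<in>J. (a i \<bullet> w)^2)"
      by (simp add: f_def inner_sum_right power2_eq_square inner_commute)
    then have "(\<Sum>i\<in>J. (a i \<bullet> w)^2) = 0" using f0 by simp
    then have z: "\<forall>i\<in>J. (a i \<bullet> w)^2 = 0" using fin by (subst (asm) sum_nonneg_eq_0_iff) auto
    have "orthogonal w w"
      by (rule orthogonal_to_span[OF w]) (use z in \<open>auto simp: orthogonal_def inner_commute\<close>)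
    then show "w = 0" by (simp add: orthogonal_def)
  qed
  obtain e where e: "e > 0" "\<And>w. w \<in> span (a ` J) \<Longrightarrow> norm (f w) \<ge> e * norm w"
    using injective_imp_isometric[OF closed_span subspace_span bl inj] by blast
  define M where "M = (\<Sum>i\<in>J. norm (a i))"
  have M0: "M \<ge> 0" by (simp add: M_def sum_nonneg)
  show ?thesis
  proof (intro exI[of _ "M / e"] conjI ballI)
    show "M / e \<ge> 0" using M0 e by simp
    fix w assume w: "w \<in> span (a ` J)"
    have "norm (f w) \<le> (\<Sum>i\<in>J. norm ((a i \<bullet> w) *\<^sub>R a i))" unfolding f_def by (rule norm_sum)
    also have "\<dots> \<le> (\<Sum>i\<in>J. \<bar>a i \<bullet> w\<bar> * M)"
    proof (rule sum_mono)
      fix i assume "i \<in> J"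
      then have "norm (a i) \<le> M" unfolding M_def using fin by (intro member_le_sum) auto
      then show "norm ((a i \<bullet> w) *\<^sub>R a i) \<le> \<bar>a i \<bullet> w\<bar> * M" by (simp add: mult_left_mono)
    qed
    also have "\<dots> = M * (\<Sum>i\<in>J. \<bar>a i \<bullet> w\<bar>)" by (simp add: sum_distrib_left mult.commute)
    finally have "e * norm w \<le> M * (\<Sum>i\<in>J. \<bar>a i \<bullet> w\<bar>)" using e(2)[OF w] by linarith
    then show "norm w \<le> M / e * (\<Sum>i\<in>J. \<bar>a i \<bullet> w\<bar>)" using e(1)
      by (simp add: field_simps)
  qed
qed

lemma span_bound:
  fixes a :: "'i \<Rightarrow> 'm::euclidean_space"
  assumes fin: "finite I"
  shows "\<exists>C\<ge>0. \<forall>J\<subseteq>I. \<forall>w\<in>span (a ` J). norm w \<le> C * (\<Sum>i\<in>J. \<bar>a i \<bullet> w\<bar>)"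
proof -
  have "\<forall>J\<in>Pow I. \<exists>C. C \<ge> 0 \<and> (\<forall>w\<in>span (a ` J). norm w \<le> C * (\<Sum>i\<in>J. \<bar>a i \<bullet> w\<bar>))"
    using span_bound1 fin by (metis PowD finite_subset)
  then obtain g where g: "\<And>J. J \<in> Pow I \<Longrightarrow> g J \<ge> 0 \<and> (\<forall>w\<in>span (a ` J). norm w \<le> g J * (\<Sum>i\<in>J. \<bar>a i \<bullet> w\<bar>))"
    by metis
  define C where "C = (\<Sum>J\<in>Pow I. g J)"
  show ?thesis
  proof (intro exI[of _ C] conjI allI impI ballI)
    show "C \<ge> 0" unfolding C_def using g by (intro sum_nonneg) auto
    fix J w assume J: "J \<subseteq> I" and w: "w \<in> span (a ` J)"
    have "g J \<le> C" unfolding C_def using fin J g by (intro member_le_sum) auto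
    then have "g J * (\<Sum>i\<in>J. \<bar>a i \<bullet> w\<bar>) \<le> C * (\<Sum>i\<in>J. \<bar>a i \<bullet> w\<bar>)"
      by (intro mult_right_mono) (auto intro: sum_nonneg)
    then show "norm w \<le> C * (\<Sum>i\<in>J. \<bar>a i \<bullet> w\<bar>)" using g[of J] J w by force
  qed
qed




lemma polyF_lipschitz:
  fixes a :: "'i \<Rightarrow> 'm::euclidean_space"
  assumes fin: "finite I"
  shows "\<exists>K\<ge>0. \<forall>b b'. polyF a I b \<noteq> {} \<longrightarrow> polyF a I b' \<noteq> {} \<longrightarrow>
     norm (closest_point (polyF a I b) 0 - closest_point (polyF a I b') 0) \<le> K * (\<Sum>i\<in>I. \<bar>b i - b' i\<bar>)"
proof -
  obtain C where C: "C \<ge> 0" "\<And>J w. J \<subseteq> I \<Longrightarrow> w \<in> span (a ` J) \<Longrightarrow> norm w \<le> C * (\<Sum>i\<in>J. \<bar>a i \<bullet> w\<bar>)"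
    using span_bound[OF fin, of a] by blast
  show ?thesis
  proof (intro exI[of _ C] conjI allI impI)
    show "C \<ge> 0" by fact
    fix b0 b1 assume ne0: "polyF a I b0 \<noteq> {}" and ne1: "polyF a I b1 \<noteq> {}"
    define bt where "bt t = (\<lambda>i. (1 - t) * b0 i + t * b1 i)" for t :: real
    define \<phi> where "\<phi> t = closest_point (polyF a I (bt t)) 0" for t
    define D where "D = (\<Sum>i\<in>I. \<bar>b1 i - b0 i\<bar>)"
    have D0: "D \<ge> 0" by (simp add: D_def sum_nonneg)
    have "0 \<le> C * D" using C(1) D0 by simp
    then have CD1: "0 < C * D + 1" by simp
    define E where "E J = {t\<in>{0..1}. validJ a I (bt t) J (\<phi> t)}" for J
    obtain z0 where z0: "z0 \<in> polyF a I b0" using ne0 by blast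
    obtain z1 where z1: "z1 \<in> polyF a I b1" using ne1 by blast
    have ne: "polyF a I (bt t) \<noteq> {}" if t: "t \<in> {0..1}" for t
    proof -
      have "(1 - t) *\<^sub>R z0 + t *\<^sub>R z1 \<in> polyF a I (bt t)"
      proof -
        have "a i \<bullet> ((1 - t) *\<^sub>R z0 + t *\<^sub>R z1) \<le> bt t i" if i: "i \<in> I" for i
        proof -
          have "a i \<bullet> ((1 - t) *\<^sub>R z0 + t *\<^sub>R z1) = (1 - t) * (a i \<bullet> z0) + t * (a i \<bullet> z1)"
            by (simp add: inner_add_right)
          also have "\<dots> \<le> (1 - t) * b0 i + t * b1 i"
            using z0 z1 i t by (intro add_mono mult_left_mono) (auto simp: polyF_def)
          finally show ?thesis by (simp add: bt_def)
        qed
        then show ?thesis by (simp add: polyF_def)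
      qed
      then show ?thesis by blast
    qed
    have lipE: "dist (\<phi> s) (\<phi> t) \<le> (C * D) * \<bar>s - t\<bar>"
      if vs: "validJ a I (bt s) J (\<phi> s)" and vt: "validJ a I (bt t) J (\<phi> t)" for s t J
    proof -
      have J: "J \<subseteq> I" using vs by (simp add: validJ_def)
      have sp: "\<phi> r \<in> span (a ` J)" if "validJ a I (bt r) J (\<phi> r)" for r
      proof -
        have "convex_cone hull (a ` J) \<subseteq> span (a ` J)"
          by (intro hull_minimal span_superset convex_cone_span)
        then have "- \<phi> r \<in> span (a ` J)" using that by (auto simp: validJ_def)
        then show ?thesis using span_neg by fastforce
      qed
      have w: "\<phi> s - \<phi> t \<in> span (a ` J)" using sp[OF vs] sp[OF vt] by (rule span_diff)
      have eq: "a i \<bullet> (\<phi> s - \<phi> t) = (s - t) * (b1 i - b0 i)" if i: "i \<in> J" for i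
        using vs vt i by (simp add: validJ_def inner_diff_right bt_def algebra_simps)
      have h1: "dist (\<phi> s) (\<phi> t) \<le> C * (\<Sum>i\<in>J. \<bar>a i \<bullet> (\<phi> s - \<phi> t)\<bar>)"
        using C(2)[OF J w] by (simp add: dist_norm)
      have h2: "(\<Sum>i\<in>J. \<bar>a i \<bullet> (\<phi> s - \<phi> t)\<bar>) = \<bar>s - t\<bar> * (\<Sum>i\<in>J. \<bar>b1 i - b0 i\<bar>)"
        by (simp add: eq abs_mult sum_distrib_left)
      have h3: "(\<Sum>i\<in>J. \<bar>b1 i - b0 i\<bar>) \<le> D"
        unfolding D_def using J fin by (intro sum_mono2) auto
      have "\<bar>s - t\<bar> * (\<Sum>i\<in>J. \<bar>b1 i - b0 i\<bar>) \<le> \<bar>s - t\<bar> * D"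
        using h3 by (intro mult_left_mono) auto
      from mult_left_mono[OF this C(1)]
      have "C * (\<bar>s - t\<bar> * (\<Sum>i\<in>J. \<bar>b1 i - b0 i\<bar>)) \<le> C * (\<bar>s - t\<bar> * D)" .
      then have "dist (\<phi> s) (\<phi> t) \<le> C * (\<bar>s - t\<bar> * D)" using h1 h2 by simp
      then show ?thesis by (simp add: mult_ac)
    qed
    have "dist (\<phi> 0) (\<phi> 1) \<le> C * D"
    proof (rule chain_lemma[of "E ` Pow I"])
      show "finite (E ` Pow I)" using fin by simp
      show "{0..1} \<subseteq> \<Union> (E ` Pow I)"
      proof
        fix t :: real assume t: "t \<in> {0..1}"
        have "validJ a I (bt t) {i\<in>I. a i \<bullet> \<phi> t = bt t i} (\<phi> t)"
          unfolding \<phi>_def by (rule validJ_nec[OF fin ne[OF t]])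
        then have "t \<in> E {i\<in>I. a i \<bullet> \<phi> t = bt t i}" using t by (simp add: E_def)
        moreover have "{i\<in>I. a i \<bullet> \<phi> t = bt t i} \<in> Pow I" by auto
        ultimately show "t \<in> \<Union> (E ` Pow I)" by blast
      qed
      show "dist (\<phi> s) (\<phi> t) \<le> C * D * \<bar>s - t\<bar>"
        if "F \<in> E ` Pow I" "s \<in> F" "t \<in> F" "s \<in> {0..1}" "t \<in> {0..1}" for F s t
        using that lipE unfolding E_def by blast
      show "closed F" if F: "F \<in> E ` Pow I" for F
      proof -
        obtain J where J: "F = E J" using F by blast
        show ?thesis unfolding J closed_sequential_limits
        proof (intro allI impI, elim conjE)
          fix x l assume xE: "\<forall>n. x n \<in> E J" and xl: "x \<longlonglongrightarrow> l"
          have l01: "l \<in> {0..1}"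
            by (rule closed_sequentially[OF closed_real_atLeastAtMost _ xl]) (use xE in \<open>auto simp: E_def\<close>)
          define z where "z n = \<phi> (x n)" for n
          have vz: "validJ a I (bt (x n)) J (z n)" for n using xE by (simp add: E_def z_def)
          have "Cauchy z"
          proof (rule metric_CauchyI)
            fix e :: real assume e: "e > 0"
            have "Cauchy x" using xl by (rule LIMSEQ_imp_Cauchy)
            moreover have "e / (C * D + 1) > 0" using e CD1 by simp
            ultimately obtain M where M: "\<And>m n. m \<ge> M \<Longrightarrow> n \<ge> M \<Longrightarrow> dist (x m) (x n) < e / (C * D + 1)"
              unfolding Cauchy_def by blast
            show "\<exists>M. \<forall>m\<ge>M. \<forall>n\<ge>M. dist (z m) (z n) < e"
            proof (intro exI[of _ M] allI impI)
              fix m n assume mn: "m \<ge> M" "n \<ge> M"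
              have "dist (z m) (z n) \<le> (C * D) * \<bar>x m - x n\<bar>"
                using lipE vz[of m] vz[of n] by (simp add: z_def)
              also have "\<dots> \<le> (C * D + 1) * \<bar>x m - x n\<bar>" by (intro mult_right_mono) auto
              also have "\<dots> < (C * D + 1) * (e / (C * D + 1))"
                using M[OF mn] CD1 by (intro mult_strict_left_mono) (auto simp: dist_real_def)
              also have "\<dots> = e" using CD1 by simp
              finally show "dist (z m) (z n) < e" .
            qed
          qed
          then obtain zs where zs: "z \<longlonglongrightarrow> zs" using Cauchy_convergent_iff convergent_def by blast
          have btl: "(\<lambda>n. bt (x n) i) \<longlonglongrightarrow> bt l i" for i
            unfolding bt_def by (intro tendsto_intros xl)
          have azs: "(\<lambda>n. a i \<bullet> z n) \<longlonglongrightarrow> a i \<bullet> zs" for i by (intro tendsto_intros zs)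
          have v: "validJ a I (bt l) J zs"
            unfolding validJ_def
          proof (intro conjI)
            show "J \<subseteq> I" using vz[of 0] by (simp add: validJ_def)
            show "zs \<in> polyF a I (bt l)"
            proof -
              have "a i \<bullet> zs \<le> bt l i" if i: "i \<in> I" for i
                using azs btl by (rule LIMSEQ_le) (use vz i in \<open>auto simp: validJ_def polyF_def\<close>)
              then show ?thesis by (simp add: polyF_def)
            qed
            show "\<forall>i\<in>J. a i \<bullet> zs = bt l i"
            proof
              fix i assume i: "i \<in> J"
              have "(\<lambda>n. a i \<bullet> z n) = (\<lambda>n. bt (x n) i)" using vz i by (auto simp: validJ_def)
              then have "(\<lambda>n. a i \<bullet> z n) \<longlonglongrightarrow> bt l i" using btl by simp
              then show "a i \<bullet> zs = bt l i" using azs by (rule LIMSEQ_unique[rotated])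
            qed
            show "- zs \<in> convex_cone hull a ` J"
            proof (rule closed_sequentially[OF closed_convex_cone_hull])
              show "finite (a ` J)" using vz[of 0] fin by (auto simp: validJ_def intro: finite_subset)
              show "- z n \<in> convex_cone hull a ` J" for n using vz by (simp add: validJ_def)
              show "(\<lambda>n. - z n) \<longlonglongrightarrow> - zs" by (intro tendsto_intros zs)
            qed
          qed
          have "zs = \<phi> l" unfolding \<phi>_def by (rule validJ_suff[OF v])
          then show "l \<in> E J" using v l01 by (simp add: E_def)
        qed
      qed
    qed
    moreover have "bt 0 = b0" "bt 1 = b1" by (auto simp: bt_def)
    moreover have "D = (\<Sum>i\<in>I. \<bar>b0 i - b1 i\<bar>)" by (simp add: D_def abs_minus_commute)
    ultimately show "norm (closest_point (polyF a I b0) 0 - closest_point (polyF a I b1) 0)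
        \<le> C * (\<Sum>i\<in>I. \<bar>b0 i - b1 i\<bar>)" by (simp add: \<phi>_def dist_norm)
  qed
qed




lemma small_lambda:
  fixes x A :: real
  assumes "A \<ge> 0" "\<And>l. 0 < l \<Longrightarrow> l \<le> 1 \<Longrightarrow> x \<le> l * A"
  shows "x \<le> 0"
proof (rule ccontr)
  assume "\<not> x \<le> 0"
  then have x: "x > 0" by simp
  define l where "l = min 1 (x / (A + 1))"
  have l: "0 < l" "l \<le> 1" using x assms(1) by (auto simp: l_def)
  have "l * A < l * (A + 1)" using l by simp
  also have "l * (A + 1) \<le> (x / (A + 1)) * (A + 1)"
    using assms(1) by (intro mult_right_mono) (auto simp: l_def)
  also have "\<dots> = x" using assms(1) by simp
  finally show False using assms(2)[OF l] by simp
qed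

lemma sqrt_upper:
  fixes r c :: real
  assumes r: "r > 0" and nn: "r^2 + c \<ge> 0"
  shows "sqrt (r^2 + c) \<le> r + c / (2 * r)"
proof (rule real_le_lsqrt)
  have "c / (2 * r) \<ge> - r / 2"
    using nn r by (simp add: field_simps power2_eq_square)
  then show "0 \<le> r + c / (2 * r)" using r by simp
  have "(r + c / (2 * r))^2 = r^2 + c + (c / (2 * r))^2"
    using r by (simp add: power2_eq_square field_simps)
  then show "r^2 + c \<le> (r + c / (2 * r))^2" by simp
qed

lemma minimax_lite:
  fixes P :: "'d::euclidean_space \<Rightarrow> 'm::euclidean_space"
  assumes lin: "linear P" and fin: "finite T" and ne: "T \<noteq> {}" and n1: "norm n \<le> 1" and eta: "\<eta> > 0"
    and dst: "\<And>y. y \<in> convex hull T \<Longrightarrow> norm y - norm (P y) < \<eta>"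
  shows "\<exists>z. \<forall>t\<in>T. n \<bullet> t - z \<bullet> P t \<le> 2 * \<eta>"
proof -
  let ?K = "convex hull T"
  define h where "h y = n \<bullet> y - sqrt ((norm (P y))^2 + \<eta>^2)" for y
  have bl: "bounded_linear P" using lin by (simp add: linear_conv_bounded_linear)
  have cP: "continuous_on ?K P" by (rule linear_continuous_on[OF bl])
  have ch: "continuous_on ?K h" unfolding h_def
    by (intro continuous_intros cP)
  have cK: "compact ?K" using fin by (simp add: compact_convex_hull finite_imp_compact)
  have neK: "?K \<noteq> {}" using ne by simp
  obtain ys where ys: "ys \<in> ?K" "\<And>y. y \<in> ?K \<Longrightarrow> h y \<le> h ys"
    using continuous_attains_sup[OF cK neK ch] by blast
  define q where "q = P ys"
  define r where "r = sqrt ((norm q)^2 + \<eta>^2)"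
  have r2: "r^2 = (norm q)^2 + \<eta>^2" unfolding r_def by (simp add: add_nonneg_nonneg)
  have rq: "norm q \<le> r" unfolding r_def by (rule real_le_rsqrt) simp
  have reta: "\<eta> \<le> r" unfolding r_def by (rule real_le_rsqrt) simp
  have rpos: "r > 0" using reta eta by simp
  define z where "z = q /\<^sub>R r"
  have key: "n \<bullet> (t - ys) \<le> z \<bullet> P (t - ys)" if t: "t \<in> T" for t
  proof -
    define d where "d = t - ys"
    define A where "A = (norm (P d))^2 / (2 * r)"
    have A0: "A \<ge> 0" using rpos by (simp add: A_def)
    have "n \<bullet> d - z \<bullet> P d \<le> l * A" if l: "0 < l" "l \<le> 1" for l
    proof -
      have "ys + l *\<^sub>R d = (1 - l) *\<^sub>R ys + l *\<^sub>R t" by (simp add: d_def algebra_simps)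
      also have "\<dots> \<in> ?K"
        using l ys(1) hull_inc[OF t] by (intro convexD) (auto simp: convex_convex_hull)
      finally have yK: "ys + l *\<^sub>R d \<in> ?K" .
      define c where "c = 2 * l * (q \<bullet> P d) + l^2 * (norm (P d))^2"
      have Pyl: "P (ys + l *\<^sub>R d) = q + l *\<^sub>R P d"
        using lin by (simp add: q_def linear_add linear_scale)
      have "(norm (q + l *\<^sub>R P d))^2 = (q + l *\<^sub>R P d) \<bullet> (q + l *\<^sub>R P d)"
        by (rule power2_norm_eq_inner)
      also have "\<dots> = q \<bullet> q + 2 * l * (q \<bullet> P d) + l^2 * (P d \<bullet> P d)"
        by (simp add: inner_add_left inner_add_right inner_commute power2_eq_square algebra_simps)
      also have "\<dots> = (norm q)^2 + 2 * l * (q \<bullet> P d) + l^2 * (norm (P d))^2"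
        by (simp add: power2_norm_eq_inner)
      finally have nq: "(norm (q + l *\<^sub>R P d))^2 = (norm q)^2 + 2 * l * (q \<bullet> P d) + l^2 * (norm (P d))^2" .
      have eqn: "(norm (P (ys + l *\<^sub>R d)))^2 + \<eta>^2 = r^2 + c"
        unfolding Pyl r2 c_def nq by simp
      have "r^2 + c \<ge> 0" using eqn[symmetric] by simp
      then have sq: "sqrt (r^2 + c) \<le> r + c / (2 * r)" by (rule sqrt_upper[OF rpos])
      have "h (ys + l *\<^sub>R d) \<le> h ys" by (rule ys(2)[OF yK])
      then have "n \<bullet> ys + l * (n \<bullet> d) - sqrt (r^2 + c) \<le> n \<bullet> ys - r"
        unfolding h_def eqn by (simp add: inner_add_right q_def[symmetric] r_def[symmetric])
      with sq have "l * (n \<bullet> d) \<le> c / (2 * r)" by simp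
      also have "c / (2 * r) = l * (z \<bullet> P d) + l * (l * A)"
        using rpos by (simp add: c_def A_def z_def field_simps power2_eq_square)
      finally have "l * (n \<bullet> d) \<le> l * (z \<bullet> P d + l * A)" by (simp add: algebra_simps)
      then have "n \<bullet> d \<le> z \<bullet> P d + l * A" using l by simp
      then show ?thesis by simp
    qed
    then have "n \<bullet> d - z \<bullet> P d \<le> 0" by (rule small_lambda[OF A0])
    then show ?thesis by (simp add: d_def)
  qed
  show ?thesis
  proof (intro exI[of _ z] ballI)
    fix t assume t: "t \<in> T"
    have Pt: "P t = q + P (t - ys)" using lin by (simp add: q_def linear_diff)
    have "n \<bullet> t - z \<bullet> P t = (n \<bullet> ys - z \<bullet> q) + (n \<bullet> (t - ys) - z \<bullet> P (t - ys))"
      unfolding Pt by (simp add: inner_add_right inner_diff_right)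
    also have "\<dots> \<le> n \<bullet> ys - z \<bullet> q" using key[OF t] by simp
    also have "z \<bullet> q = r - \<eta>^2 / r"
      using rpos r2 by (simp add: z_def field_simps power2_eq_square flip: norm_eq_sqrt_inner real_sqrt_mult_self) (simp add: inner_commute power2_norm_eq_inner[symmetric] power2_eq_square)
    also have "\<eta>^2 / r \<le> \<eta>"
      using reta eta rpos by (simp add: field_simps power2_eq_square mult_right_mono)
    then have "n \<bullet> ys - (r - \<eta>^2 / r) \<le> n \<bullet> ys - r + \<eta>" by simp
    also have "n \<bullet> ys \<le> norm ys"
      using norm_cauchy_schwarz[of n ys] n1 by (smt (verit) mult_right_mono norm_ge_zero mult_cancel_right1)
    then have "n \<bullet> ys - r + \<eta> \<le> norm ys - norm q + \<eta>" using rq by simp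
    also have "\<dots> < 2 * \<eta>" using dst[OF ys(1)] by (simp add: q_def)
    finally show "n \<bullet> t - z \<bullet> P t \<le> 2 * \<eta>" by simp
  qed
qed




lemma open_voronoi:
  fixes X :: "'a::metric_space set"
  assumes "finite X"
  shows "open (voronoi_cell X x)"
proof -
  have "voronoi_cell X x = (\<Inter>y\<in>X - {x}. {u. dist u x < dist u y})"
    by (auto simp: voronoi_cell_def)
  also have "open \<dots>"
    using assms by (intro open_INT ballI open_Collect_less continuous_intros) auto
  finally show ?thesis .
qed

lemma NN_voronoi:
  assumes "is_NN_rule X NN" "u \<in> voronoi_cell X xk" "xk \<in> X"
  shows "NN u = xk"
proof (rule ccontr)
  assume ne: "NN u \<noteq> xk"
  have NX: "NN u \<in> X" "dist u (NN u) \<le> dist u xk" using assms(1,3) by (auto simp: is_NN_rule_def)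
  then have "dist u xk < dist u (NN u)" using assms(2) ne by (auto simp: voronoi_cell_def)
  then show False using NX by simp
qed

lemma feasible_exists:
  fixes X :: "'d::euclidean_space set" and P :: "'d \<Rightarrow> 'm::euclidean_space"
  assumes fin: "finite X" and xk: "xk \<in> X" and lin: "linear P"
    and chd: "conv_hull_distortion P (eps / 60) (diff_dirs X)" and eps: "eps > 0"
  shows "\<exists>z. \<forall>x\<in>X. \<bar>inner z (P (x - xk)) - inner v (x - xk)\<bar> \<le> eps / 10 * norm v * norm (x - xk)"
proof (cases "v = 0 \<or> X - {xk} = {}")
  case True
  show ?thesis
  proof (intro exI[of _ 0] ballI)
    fix x assume "x \<in> X"
    with True have "v = 0 \<or> x = xk" by blast
    then show "\<bar>inner 0 (P (x - xk)) - inner v (x - xk)\<bar> \<le> eps / 10 * norm v * norm (x - xk)" using lin by (auto simp: linear_0)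
  qed
next
  case False
  then have v0: "v \<noteq> 0" and Xne: "X - {xk} \<noteq> {}" by auto
  define T where "T = (\<lambda>x. (x - xk) /\<^sub>R norm (x - xk)) ` (X - {xk}) \<union> (\<lambda>x. (xk - x) /\<^sub>R norm (xk - x)) ` (X - {xk})"
  have Tfin: "finite T" using fin by (simp add: T_def)
  have Tne: "T \<noteq> {}" using Xne by (simp add: T_def)
  have Tsub: "T \<subseteq> diff_dirs X"
    unfolding T_def diff_dirs_def using xk by (intro subset_trans[OF _ closure_subset]) blast
  have dst: "norm y - norm (P y) < eps / 60" if "y \<in> convex hull T" for y
  proof -
    have "y \<in> convex hull (diff_dirs X)" using hull_mono[OF Tsub] that by blast
    then have "\<bar>norm (P y) - norm y\<bar> < eps / 60" using chd by (auto simp: conv_hull_distortion_def)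
    then show ?thesis by linarith
  qed
  define n where "n = v /\<^sub>R norm v"
  have n1: "norm n \<le> 1" using v0 by (simp add: n_def)
  obtain z0 where z0: "\<And>t. t \<in> T \<Longrightarrow> n \<bullet> t - z0 \<bullet> P t \<le> 2 * (eps / 60)"
    using minimax_lite[OF lin Tfin Tne n1, of "eps / 60"] eps dst by auto
  define z where "z = norm v *\<^sub>R z0"
  show ?thesis
  proof (intro exI[of _ z] ballI)
    fix x assume x: "x \<in> X"
    show "\<bar>inner z (P (x - xk)) - inner v (x - xk)\<bar> \<le> eps / 10 * norm v * norm (x - xk)"
    proof (cases "x = xk")
      case True then show ?thesis using lin by (simp add: linear_0)
    next
      case False
      define w where "w = x - xk"
      define s where "s = w /\<^sub>R norm w"
      have w0: "w \<noteq> 0" using False by (simp add: w_def)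
      have s1: "s \<in> T" using x False by (auto simp: T_def s_def w_def)
      have "(xk - x) /\<^sub>R norm (xk - x) \<in> T" using x False by (auto simp: T_def)
      moreover have "(xk - x) /\<^sub>R norm (xk - x) = - s"
        by (simp add: s_def w_def norm_minus_commute scaleR_diff_right)
      ultimately have s2: "- s \<in> T" by simp
      have Pm: "P (- s) = - P s" using lin by (simp add: linear_neg)
      have b1: "n \<bullet> s - z0 \<bullet> P s \<le> eps / 30" using z0[OF s1] by simp
      have b2: "- (n \<bullet> s) + z0 \<bullet> P s \<le> eps / 30" using z0[OF s2] Pm by simp
      have ab: "\<bar>z0 \<bullet> P s - n \<bullet> s\<bar> \<le> eps / 30" using b1 b2 by linarith
      have ws: "w = norm w *\<^sub>R s" using w0 by (simp add: s_def)
      have Pw: "P w = norm w *\<^sub>R P s"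
      proof -
        have "P w = P (norm w *\<^sub>R s)" using ws by simp
        also have "\<dots> = norm w *\<^sub>R P s" using lin by (simp add: linear_scale)
        finally show ?thesis .
      qed
      have vn: "v = norm v *\<^sub>R n" using v0 by (simp add: n_def)
      have eq: "inner z (P w) - inner v w = (norm v * norm w) * (z0 \<bullet> P s - n \<bullet> s)"
      proof -
        have "inner v w = (norm v * norm w) * (n \<bullet> s)"
          by (subst vn, subst ws) (simp add: inner_scaleR_left inner_scaleR_right)
        moreover have "inner z (P w) = (norm v * norm w) * (z0 \<bullet> P s)"
          by (simp add: Pw z_def)
        ultimately show ?thesis by (simp add: algebra_simps)
      qed
      have "\<bar>inner z (P w) - inner v w\<bar> = (norm v * norm w) * \<bar>z0 \<bullet> P s - n \<bullet> s\<bar>"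
        unfolding eq by (simp add: abs_mult)
      also have "\<dots> \<le> (norm v * norm w) * (eps / 30)"
        using ab by (intro mult_left_mono) auto
      also have "\<dots> \<le> eps / 10 * norm v * norm w" using eps by simp
      finally show ?thesis by (simp add: w_def)
    qed
  qed
qed




lemma bv_lip:
  fixes v w xk y :: "'d::euclidean_space" and eps :: real
  assumes eps: "eps > 0"
  shows "\<bar>(if s then (v - xk) \<bullet> y + eps / 10 * norm (v - xk) * norm y
               else - ((v - xk) \<bullet> y) + eps / 10 * norm (v - xk) * norm y)
        - (if s then (w - xk) \<bullet> y + eps / 10 * norm (w - xk) * norm y
               else - ((w - xk) \<bullet> y) + eps / 10 * norm (w - xk) * norm y)\<bar>
      \<le> (1 + eps / 10) * norm y * norm (v - w)"
proof -
  have g: "\<bar>(v - xk) \<bullet> y - (w - xk) \<bullet> y\<bar> \<le> norm (v - w) * norm y"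
  proof -
    have "(v - xk) \<bullet> y - (w - xk) \<bullet> y = (v - w) \<bullet> y" by (simp add: inner_diff_left)
    then show ?thesis using Cauchy_Schwarz_ineq2[of "v - w" y] by simp
  qed
  have hh: "\<bar>eps / 10 * norm (v - xk) * norm y - eps / 10 * norm (w - xk) * norm y\<bar>
      \<le> eps / 10 * norm y * norm (v - w)"
  proof -
    have e: "eps / 10 * norm (v - xk) * norm y - eps / 10 * norm (w - xk) * norm y
        = (eps / 10 * norm y) * (norm (v - xk) - norm (w - xk))" by (simp add: algebra_simps)
    have "\<bar>norm (v - xk) - norm (w - xk)\<bar> \<le> norm (v - w)"
      using norm_triangle_ineq3[of "v - xk" "w - xk"] by simp
    then have "(eps / 10 * norm y) * \<bar>norm (v - xk) - norm (w - xk)\<bar> \<le> (eps / 10 * norm y) * norm (v - w)"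
      using eps by (intro mult_left_mono) auto
    then show ?thesis unfolding e using eps by (simp add: abs_mult)
  qed
  have eq: "(1 + eps / 10) * norm y * norm (v - w) = norm (v - w) * norm y + eps / 10 * norm y * norm (v - w)"
    by (simp add: algebra_simps)
  show ?thesis
  proof (cases s)
    case True
    then show ?thesis using g hh eq by (simp only: if_True)
  next
    case False
    then show ?thesis using g hh eq by (simp only: if_False)
  qed
qed

theorem corollary3p1:
  fixes X :: "'d::euclidean_space set"
    and P :: "'d \<Rightarrow> 'm::euclidean_space"
    and NN :: "'d \<Rightarrow> 'd"
    and eps :: real
  assumes "finite X" "X \<noteq> {}"
    and "0 < eps" "eps < 1"
    and "linear P"
    and "conv_hull_distortion P (eps / 60) (diff_dirs X)"
    and "is_NN_rule X NN"
  defines "V \<equiv> (\<Union>x\<in>X. voronoi_cell X x)"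
  shows "(\<forall>u \<in> V - X. locally_lipschitz_at (sol_map P eps X NN) u)
         \<and> (UNIV - V) \<in> null_sets lborel
         \<and> (AE u in lborel. locally_lipschitz_at (sol_map P eps X NN) u)"
proof -
  note fin = assms(1) and eps = assms(3) and lin = assms(5) and chd = assms(6) and nn = assms(7)
  have part1: "locally_lipschitz_at (sol_map P eps X NN) u" if u: "u \<in> V" for u
  proof -
    obtain xk where xk: "xk \<in> X" "u \<in> voronoi_cell X xk" using u by (auto simp: V_def)
    define U where "U = voronoi_cell X xk"
    define I where "I = X \<times> (UNIV :: bool set)"
    define a where "a i = (if snd i then P (fst i - xk) else - P (fst i - xk))" for i
    define bv where "bv v i = (if snd i then (v - xk) \<bullet> (fst i - xk) + eps / 10 * norm (v - xk) * norm (fst i - xk)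
               else - ((v - xk) \<bullet> (fst i - xk)) + eps / 10 * norm (v - xk) * norm (fst i - xk))" for v i
    have finI: "finite I" using fin by (simp add: I_def)
    have NNU: "NN v = xk" if "v \<in> U" for v using NN_voronoi[OF nn _ xk(1)] that by (simp add: U_def)
    have feq: "feas_set P eps X NN v = polyF a I (bv v)" if v: "v \<in> U" for v
    proof -
      have "z \<in> feas_set P eps X NN v \<longleftrightarrow> z \<in> polyF a I (bv v)" for z
      proof -
        have "z \<in> polyF a I (bv v) \<longleftrightarrow> (\<forall>x\<in>X. a (x, True) \<bullet> z \<le> bv v (x, True) \<and> a (x, False) \<bullet> z \<le> bv v (x, False))"
          unfolding polyF_def I_def by auto (metis (full_types))
        also have "\<dots> \<longleftrightarrow> z \<in> feas_set P eps X NN v"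
          unfolding feas_set_def NNU[OF v] a_def bv_def
          by (auto simp: inner_commute)
        finally show ?thesis by simp
      qed
      then show ?thesis by blast
    qed
    have nonemp: "polyF a I (bv v) \<noteq> {}" if v: "v \<in> U" for v
    proof -
      obtain z where z: "\<forall>x\<in>X. \<bar>inner z (P (x - xk)) - inner (v - xk) (x - xk)\<bar> \<le> eps / 10 * norm (v - xk) * norm (x - xk)"
        using feasible_exists[OF fin xk(1) lin chd eps] by blast
      have "z \<in> feas_set P eps X NN v"
        unfolding feas_set_def NNU[OF v]
      proof (intro CollectI ballI)
        fix x assume x: "x \<in> X"
        have h: "\<bar>inner z (P (x - xk)) - inner (v - xk) (x - xk)\<bar> \<le> eps / 10 * norm (v - xk) * norm (x - xk)"
          using z x by blast
        then have "inner z (P (x - xk)) - inner (v - xk) (x - xk) \<le> eps / 10 * norm (v - xk) * norm (x - xk)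
           \<and> - (inner z (P (x - xk)) - inner (v - xk) (x - xk)) \<le> eps / 10 * norm (v - xk) * norm (x - xk)"
          by (simp only: abs_le_iff)
        then show "inner z (P (x - xk)) - inner (v - xk) (x - xk) - eps / 10 * norm (v - xk) * norm (x - xk) \<le> 0 \<and>
          inner (v - xk) (x - xk) - inner z (P (x - xk)) - eps / 10 * norm (v - xk) * norm (x - xk) \<le> 0"
          by linarith
      qed
      then show ?thesis using feq[OF v] by auto
    qed
    obtain K where K: "K \<ge> 0" "\<And>b b'. polyF a I b \<noteq> {} \<Longrightarrow> polyF a I b' \<noteq> {} \<Longrightarrow>
       norm (closest_point (polyF a I b) 0 - closest_point (polyF a I b') 0) \<le> K * (\<Sum>i\<in>I. \<bar>b i - b' i\<bar>)"
      using polyF_lipschitz[OF finI, of a] by blast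
    define L where "L = (\<Sum>i\<in>I. (1 + eps / 10) * norm (fst i - xk))"
    have L0: "L \<ge> 0" unfolding L_def using eps by (intro sum_nonneg) auto
    show ?thesis unfolding locally_lipschitz_at_def
    proof (intro exI[of _ U] exI[of _ "K * L + 1"] conjI ballI)
      show "open U" unfolding U_def by (rule open_voronoi[OF fin])
      show "u \<in> U" using xk by (simp add: U_def)
      show "0 < K * L + 1" using K(1) L0 by (simp add: add_nonneg_pos)
      fix v w assume v: "v \<in> U" and w: "w \<in> U"
      have "dist (sol_map P eps X NN v) (sol_map P eps X NN w)
          = norm (closest_point (polyF a I (bv v)) 0 - closest_point (polyF a I (bv w)) 0)"
        by (simp add: sol_map_def feq[OF v] feq[OF w] dist_norm)
      also have "\<dots> \<le> K * (\<Sum>i\<in>I. \<bar>bv v i - bv w i\<bar>)" by (rule K(2)[OF nonemp[OF v] nonemp[OF w]])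
      also have "(\<Sum>i\<in>I. \<bar>bv v i - bv w i\<bar>) \<le> (\<Sum>i\<in>I. (1 + eps / 10) * norm (fst i - xk) * norm (v - w))"
        by (intro sum_mono) (simp add: bv_def bv_lip[OF eps])
      also have "\<dots> = L * dist v w" by (simp add: L_def sum_distrib_right dist_norm)
      finally have "dist (sol_map P eps X NN v) (sol_map P eps X NN w) \<le> K * (L * dist v w)"
        using K(1) by (simp add: mult_left_mono)
      also have "\<dots> \<le> (K * L + 1) * dist v w" by (simp add: algebra_simps)
      finally show "dist (sol_map P eps X NN v) (sol_map P eps X NN w) \<le> (K * L + 1) * dist v w" .
    qed
  qed
  have openV: "open V" unfolding V_def using fin by (intro open_UN ballI open_voronoi)
  have part2: "(UNIV - V) \<in> null_sets lborel"
  proof -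
    define H where "H = (\<Union>x\<in>X. \<Union>y\<in>X - {x}. {u. (2 *\<^sub>R (y - x)) \<bullet> u = y \<bullet> y - x \<bullet> x})"
    have sub: "UNIV - V \<subseteq> H"
    proof
      fix u assume "u \<in> UNIV - V"
      then have uV: "\<And>x. x \<in> X \<Longrightarrow> u \<notin> voronoi_cell X x" by (auto simp: V_def)
      define x where "x = NN u"
      have x: "x \<in> X" "\<And>y. y \<in> X \<Longrightarrow> dist u x \<le> dist u y" using nn by (auto simp: x_def is_NN_rule_def)
      obtain y where y: "y \<in> X" "y \<noteq> x" "dist u y \<le> dist u x"
        using uV[OF x(1)] by (auto simp: voronoi_cell_def not_less)
      have "dist u x = dist u y" using x(2)[OF y(1)] y(3) by simp
      then have "norm (u - x)^2 = norm (u - y)^2" by (simp add: dist_norm)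
      then have "(u - x) \<bullet> (u - x) = (u - y) \<bullet> (u - y)" by (simp add: power2_norm_eq_inner)
      then have "(2 *\<^sub>R (y - x)) \<bullet> u = y \<bullet> y - x \<bullet> x"
        by (simp add: inner_diff_left inner_diff_right inner_commute algebra_simps)
      then show "u \<in> H" using x(1) y(1,2) by (auto simp: H_def)
    qed
    have Hnull: "H \<in> null_sets lborel"
    proof -
      have "{u. (2 *\<^sub>R (y - x)) \<bullet> u = y \<bullet> y - x \<bullet> x} \<in> null_sets lborel" if "y \<noteq> x" for x y :: 'd
      proof -
        let ?S = "{u. (2 *\<^sub>R (y - x)) \<bullet> u = y \<bullet> y - x \<bullet> x}"
        have "negligible ?S" using that by (intro negligible_hyperplane) simp
        then have "?S \<in> null_sets lebesgue" by (simp add: negligible_iff_null_sets)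
        moreover have "?S \<in> sets lborel" by (simp add: borel_closed closed_hyperplane)
        ultimately show ?thesis by (simp add: null_sets_completion_iff)
      qed
      then show ?thesis unfolding H_def using fin
        by (intro null_sets.finite_UN) auto
    qed
    have "UNIV - V \<in> sets lborel" using openV by (simp add: borel_closed closed_Diff)
    then show ?thesis by (rule null_sets_subset[OF Hnull _ sub])
  qed
  have part3: "AE u in lborel. locally_lipschitz_at (sol_map P eps X NN) u"
  proof (rule AE_I')
    show "(UNIV - V) \<union> X \<in> null_sets lborel" using part2 finite_imp_null_set_lborel[OF fin] by auto
    show "{u \<in> space lborel. \<not> locally_lipschitz_at (sol_map P eps X NN) u} \<subseteq> (UNIV - V) \<union> X"
      using part1 by auto
  qed
  show ?thesis using part1 part2 part3 by blast
qed


end
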